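(* Let $N=(S,T,F,I)$ be a pure Petri net and let $x,y$ be configurations of $N$. Then $x\to_N y$ if and only if $x\le y$ and every multiset $Z$ with $x\le Z\le y$ is a configuration of $N$.
   Context: A Petri net $(S,T,F,I)$ has disjoint places $S$ and transitions $T$, $F:(S\times T\cup T\times S)\to\mathbb{N}$, initial marking $I:S\to\mathbb{N}$. It is pure if there are no $s\in S,t\in T$ with $F(s,t)>0$ and $F(t,s)>0$. For a finite multiset $U:T\to\mathbb{N}$, ${}^\bullet U(s)=\sum_t F(s,t)U(t)$ and $U^\bullet(s)=\sum_tU(t)F(t,s)$. A finite multiset $X$ of transitions is a configuration iff $M_X:=I-{}^\bullet X+X^\bullet\ge0$ pointwise. For multisets, $\le$ is pointwise. For configurations $x,y$, the step transition relation is defined by $x\to_N y$ iff $x\le y$ and ${}^\bullet(y-x)\le M_x$ (the multiset $y-x$ is enabled under $M_x$; firing it yields $M_y$). *)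

theory Defs
  imports "HOL-Library.Multiset"
begin

text \<open>A Petri net (S,T,F,I): places of type 's in the set S, transitions of type 't
 in the set T (disjoint since they live in different types).  The flow function F is
 split into its two components Fst s t = F(s,t) and Fts t s = F(t,s); I is the initial
 marking.\<close>

definition petri_net :: "'s set \<Rightarrow> 't set \<Rightarrow> ('s \<Rightarrow> 't \<Rightarrow> nat) \<Rightarrow> ('t \<Rightarrow> 's \<Rightarrow> nat) \<Rightarrow> ('s \<Rightarrow> nat) \<Rightarrow> bool" where
  "petri_net S T Fst Fts I \<longleftrightarrow>
     (\<forall>s t. (s \<notin> S \<or> t \<notin> T) \<longrightarrow> Fst s t = 0 \<and> Fts t s = 0) \<and> (\<forall>s. s \<notin> S \<longrightarrow> I s = 0)"

definition pure_net :: "'s set \<Rightarrow> 't set \<Rightarrow> ('s \<Rightarrow> 't \<Rightarrow> nat) \<Rightarrow> ('t \<Rightarrow> 's \<Rightarrow> nat) \<Rightarrow> bool" where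
  "pure_net S T Fst Fts \<longleftrightarrow> \<not> (\<exists>s\<in>S. \<exists>t\<in>T. Fst s t > 0 \<and> Fts t s > 0)"

definition preset :: "('s \<Rightarrow> 't \<Rightarrow> nat) \<Rightarrow> 't multiset \<Rightarrow> 's \<Rightarrow> nat" where
  "preset Fst U s = (\<Sum>t\<in>set_mset U. Fst s t * count U t)"

definition postset :: "('t \<Rightarrow> 's \<Rightarrow> nat) \<Rightarrow> 't multiset \<Rightarrow> 's \<Rightarrow> nat" where
  "postset Fts U s = (\<Sum>t\<in>set_mset U. count U t * Fts t s)"

definition marking :: "('s \<Rightarrow> 't \<Rightarrow> nat) \<Rightarrow> ('t \<Rightarrow> 's \<Rightarrow> nat) \<Rightarrow> ('s \<Rightarrow> nat) \<Rightarrow> 't multiset \<Rightarrow> 's \<Rightarrow> int" where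
  "marking Fst Fts I X s = int (I s) - int (preset Fst X s) + int (postset Fts X s)"

definition configuration :: "'s set \<Rightarrow> 't set \<Rightarrow> ('s \<Rightarrow> 't \<Rightarrow> nat) \<Rightarrow> ('t \<Rightarrow> 's \<Rightarrow> nat) \<Rightarrow> ('s \<Rightarrow> nat) \<Rightarrow> 't multiset \<Rightarrow> bool" where
  "configuration S T Fst Fts I X \<longleftrightarrow> set_mset X \<subseteq> T \<and> (\<forall>s\<in>S. marking Fst Fts I X s \<ge> 0)"

definition step_rel :: "'s set \<Rightarrow> 't set \<Rightarrow> ('s \<Rightarrow> 't \<Rightarrow> nat) \<Rightarrow> ('t \<Rightarrow> 's \<Rightarrow> nat) \<Rightarrow> ('s \<Rightarrow> nat) \<Rightarrow> 't multiset \<Rightarrow> 't multiset \<Rightarrow> bool" where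
  "step_rel S T Fst Fts I x y \<longleftrightarrow> configuration S T Fst Fts I x \<and> configuration S T Fst Fts I y \<and>
     x \<subseteq># y \<and> (\<forall>s\<in>S. int (preset Fst (y - x) s) \<le> marking Fst Fts I x s)"

end

theory Submission
  imports Defs
begin

lemma preset_sup:
  assumes "finite A" "set_mset U \<subseteq> A"
  shows "preset Fst U s = (\<Sum>t\<in>A. Fst s t * count U t)"
  unfolding preset_def
  by (rule sum.mono_neutral_left) (use assms in \<open>auto simp: count_eq_zero_iff\<close>)

lemma postset_sup:
  assumes "finite A" "set_mset U \<subseteq> A"
  shows "postset Fts U s = (\<Sum>t\<in>A. count U t * Fts t s)"
  unfolding postset_def
  by (rule sum.mono_neutral_left) (use assms in \<open>auto simp: count_eq_zero_iff\<close>)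

lemma preset_add: "preset Fst (U + V) s = preset Fst U s + preset Fst V s"
proof -
  let ?A = "set_mset U \<union> set_mset V"
  have "preset Fst (U + V) s = (\<Sum>t\<in>?A. Fst s t * count (U+V) t)"
    by (rule preset_sup) auto
  also have "\<dots> = (\<Sum>t\<in>?A. Fst s t * count U t) + (\<Sum>t\<in>?A. Fst s t * count V t)"
    by (simp add: sum.distrib algebra_simps)
  also have "\<dots> = preset Fst U s + preset Fst V s"
    using preset_sup[of ?A U Fst s] preset_sup[of ?A V Fst s] by auto
  finally show ?thesis .
qed

lemma postset_add: "postset Fts (U + V) s = postset Fts U s + postset Fts V s"
proof -
  let ?A = "set_mset U \<union> set_mset V"
  have "postset Fts (U + V) s = (\<Sum>t\<in>?A. count (U+V) t * Fts t s)"
    by (rule postset_sup) auto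
  also have "\<dots> = (\<Sum>t\<in>?A. count U t * Fts t s) + (\<Sum>t\<in>?A. count V t * Fts t s)"
    by (simp add: sum.distrib algebra_simps)
  also have "\<dots> = postset Fts U s + postset Fts V s"
    using postset_sup[of ?A U Fts s] postset_sup[of ?A V Fts s] by auto
  finally show ?thesis .
qed

lemma preset_mono: "U \<subseteq># V \<Longrightarrow> preset Fst U s \<le> preset Fst V s"
  by (metis le_add1 preset_add subset_mset.add_diff_inverse)

lemma marking_add: "marking Fst Fts I (x + D) s =
   marking Fst Fts I x s - int (preset Fst D s) + int (postset Fts D s)"
  unfolding marking_def by (simp add: preset_add postset_add)

theorem mainTheorem9:
  fixes S :: "'s set" and T :: "'t set"
    and Fst :: "'s \<Rightarrow> 't \<Rightarrow> nat" and Fts :: "'t \<Rightarrow> 's \<Rightarrow> nat" and I :: "'s \<Rightarrow> nat"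
    and x y :: "'t multiset"
  assumes "petri_net S T Fst Fts I"
    and pure: "pure_net S T Fst Fts"
    and cx: "configuration S T Fst Fts I x"
    and cy: "configuration S T Fst Fts I y"
  shows "step_rel S T Fst Fts I x y \<longleftrightarrow>
           (x \<subseteq># y \<and> (\<forall>Z. x \<subseteq># Z \<and> Z \<subseteq># y \<longrightarrow> configuration S T Fst Fts I Z))"
proof
  assume st: "step_rel S T Fst Fts I x y"
  hence xy: "x \<subseteq># y" and en: "\<forall>s\<in>S. int (preset Fst (y - x) s) \<le> marking Fst Fts I x s"
    unfolding step_rel_def by auto
  show "x \<subseteq># y \<and> (\<forall>Z. x \<subseteq># Z \<and> Z \<subseteq># y \<longrightarrow> configuration S T Fst Fts I Z)"
  proof (intro conjI allI impI xy)
    fix Z assume Z: "x \<subseteq># Z \<and> Z \<subseteq># y"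
    have TZ: "set_mset Z \<subseteq> T" using Z cy unfolding configuration_def
      by (meson mset_subset_eqD subset_iff)
    have "Z = x + (Z - x)" using Z by simp
    moreover have "Z - x \<subseteq># y - x" using Z by (simp add: subseteq_mset_def diff_le_mono)
    ultimately have "marking Fst Fts I Z s \<ge> 0" if "s \<in> S" for s
      using en that marking_add[of Fst Fts I x "Z - x" s] preset_mono[of "Z - x" "y - x" Fst s]
      by (smt (verit) of_nat_0_le_iff of_nat_le_iff)
    thus "configuration S T Fst Fts I Z" using TZ unfolding configuration_def by auto
  qed
next
  assume R: "x \<subseteq># y \<and> (\<forall>Z. x \<subseteq># Z \<and> Z \<subseteq># y \<longrightarrow> configuration S T Fst Fts I Z)"
  hence xy: "x \<subseteq># y" by auto
  have "int (preset Fst (y - x) s) \<le> marking Fst Fts I x s" if sS: "s \<in> S" for s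
  proof -
    define D where "D = y - x"
    define D' where "D' = filter_mset (\<lambda>t. Fst s t > 0) D"
    have D'D: "D' \<subseteq># D" unfolding D'_def by simp
    have "x \<subseteq># x + D'" by simp
    moreover have "x + D' \<subseteq># y" using D'D xy unfolding D_def
      by (auto simp: subseteq_mset_def) (metis le_diff_conv2 add.commute)
    ultimately have cz: "configuration S T Fst Fts I (x + D')" using R by blast
    have DT: "set_mset D \<subseteq> T" using cy unfolding D_def configuration_def
      by (meson in_diffD subset_iff)
    have "postset Fts D' s = 0" unfolding postset_def
    proof (rule sum.neutral, rule ballI)
      fix t assume "t \<in> set_mset D'"
      hence "t \<in> T" "Fst s t > 0" using DT unfolding D'_def by auto
      hence "Fts t s = 0" using pure sS unfolding pure_net_def by fastforce
      thus "count D' t * Fts t s = 0" by simp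
    qed
    moreover have "preset Fst D' s = preset Fst D s"
    proof -
      have "preset Fst D s = preset Fst D' s + preset Fst (D - D') s"
        using preset_add[of Fst D' "D - D'" s] D'D by simp
      moreover have "preset Fst (D - D') s = 0" unfolding preset_def
      proof (rule sum.neutral, rule ballI)
        fix t assume "t \<in> set_mset (D - D')"
        hence "t \<in># D" "count D' t < count D t" using in_diffD in_diff_count by metis+
        hence "Fst s t = 0" unfolding D'_def by (auto split: if_splits)
        thus "Fst s t * count (D - D') t = 0" by simp
      qed
      ultimately show ?thesis by simp
    qed
    ultimately show ?thesis using cz sS marking_add[of Fst Fts I x D' s]
      unfolding configuration_def D_def by auto
  qed
  thus "step_rel S T Fst Fts I x y" using cx cy xy unfolding step_rel_def by auto
qed

end
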